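(* Let $n\ge4$. The fan $F_{2,n}$ in $\mathbb R^{n-3}$ is equal to the Stanley–Pitman fan $F_{n-3}$ in $\mathbb R^{n-3}$ (they have the same cones).
   Context: $\mathrm{Web}_{k,n}$: grid vertices $v_{a,c}$, $a\in[k]$ (rows top to bottom), $c\in[n-k]$ (columns right to left); sources $s_a$ right of row $a$ labelled $a$; sinks $t_c$ below column $c$ labelled $k+c$; edges $s_a\to v_{a,1}$, $v_{a,c}\to v_{a,c+1}$, $v_{a,c}\to v_{a+1,c}$, $v_{k,c}\to t_c$. Regions $r_{a,c}$ ($a\in[k]$, $c\in[n-k]$): the face just below row $a$ (below row $k$ if $a=k$) and just right of column $c$ (between column 1 and the right boundary if $c=1$); inner regions are those with $a<k$ and $c\ge2$, the others are outer. A path $p$ from $s_i$ moves left along row $i$ to column $c_i$, down, left to $c_{i+1}$, \dots, down from $v_{k,c_k}$ to $t_{c_k}$ ($c_i\le\dots\le c_k$). Given real values $x_r$ on the inner regions (outer regions assigned the value $0$), $\mathrm{Sum}_p(x)=\sum_{a=i}^k\sum_{c=1}^{c_a}x_{r_{a,c}}$. For $K\in\binom{[n]}{k}$, $\mathrm{Path}(K)$ is the set of families of pairwise vertex-disjoint paths from the sources labelled by $[k]\setminus K$ to the sinks labelled by $K\setminus[k]$, and $\operatorname{Trop}P_K(x)=\min_{S\in\mathrm{Path}(K)}\sum_{p\in S}\mathrm{Sum}_p(x)$ (values assigned to outer regions would only add a constant to each $\operatorname{Trop}P_K$). $F_{k,n}$ is the complete fan in $\mathbb R^{(k-1)(n-k-1)}$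 whose maximal cones are the domains of linearity of the piecewise linear map $x\mapsto(\operatorname{Trop}P_K(x))_{K}$, i.e. the common refinement of the fans of domains of linearity of the functions $\operatorname{Trop}P_K$. For $k=2$ the inner regions are $r_{1,c}$, $c=2,\dots,n-2$, and we use coordinates $x_m=x_{r_{1,m+1}}$, $m=1,\dots,n-3$ (inner regions labelled right to left). Stanley–Pitman fan $F_{n-3}$: a plane binary tree is a rooted tree in which every vertex has either no children or exactly two, designated left and right; internal vertices are non-leaves. For a plane binary tree $T$ with $n-1$ leaves, label its $n-2$ internal vertices $1,\dots,n-2$ in in-order (symmetric order: left subtree, then the vertex, then right subtree). For each pair of internal vertices with $i$ the parent of $j$, impose $x_i+\dots+x_{j-1}\ge0$ if $i<j$, and $x_j+\dots+x_{i-1}\le0$ if $i>j$. These $n-3$ inequalities define a cone $C_T\subset\mathbb R^{n-3}$, and $F_{n-3}$ is the fan whose maximal cones are the $C_T$ over all such trees $T$. *)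

theory Defs
  imports Complex_Main
begin

text \<open>A point of R^R (R a finite coordinate set) is a function that vanishes outside R.
  The topology is the Euclidean one, described via the sup-norm over the coordinates R.\<close>

definition Vsp :: "'r set \<Rightarrow> ('r \<Rightarrow> real) set" where
  "Vsp R = {x. \<forall>r. r \<notin> R \<longrightarrow> x r = 0}"

definition has_nonempty_interior :: "'r set \<Rightarrow> ('r \<Rightarrow> real) set \<Rightarrow> bool" where
  "has_nonempty_interior R D \<longleftrightarrow>
     (\<exists>x\<in>Vsp R. \<exists>e>0. \<forall>y\<in>Vsp R. (\<forall>r\<in>R. \<bar>y r - x r\<bar> < e) \<longrightarrow> y \<in> D)"

text \<open>Domains of linearity (maximal cones) of a piecewise linear map
  x \<mapsto> (F K x)_{K \<in> I}: the full-dimensional maximal sets on which the map agrees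
  with one linear map (a K r) (a linear map is determined by its values on a set with
  nonempty interior, so the maximal such set is the one below).\<close>

definition linearity_domains ::
  "'r set \<Rightarrow> 'k set \<Rightarrow> ('k \<Rightarrow> ('r \<Rightarrow> real) \<Rightarrow> real) \<Rightarrow> ('r \<Rightarrow> real) set set" where
  "linearity_domains R I F =
     {D. (\<exists>a :: 'k \<Rightarrow> 'r \<Rightarrow> real.
            D = {x \<in> Vsp R. \<forall>K\<in>I. F K x = (\<Sum>r\<in>R. a K r * x r)})
         \<and> has_nonempty_interior R D}"

text \<open>Vertex v_{a,c} is the pair (a,c); region r_{a,c} is the pair (a,c).\<close>

definition inner_regions :: "nat \<Rightarrow> nat \<Rightarrow> (nat \<times> nat) set" where
  "inner_regions k n = {(a, c). 1 \<le> a \<and> a < k \<and> 2 \<le> c \<and> c \<le> n - k}"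

text \<open>A path from source s_i is encoded by its column sequence p i \<le> p (i+1) \<le> ... \<le> p k
  (p a = c_a); it ends at sink t_{p k}, labelled k + p k.\<close>

definition is_web_path :: "nat \<Rightarrow> nat \<Rightarrow> nat \<Rightarrow> (nat \<Rightarrow> nat) \<Rightarrow> bool" where
  "is_web_path k n i p \<longleftrightarrow> 1 \<le> i \<and> i \<le> k \<and> 1 \<le> p i \<and>
     (\<forall>a\<in>{i..<k}. p a \<le> p (Suc a)) \<and> p k \<le> n - k"

text \<open>Internal vertices visited by the path (source and sink vertices are distinct
  for distinct labels, and the sink t_c is determined by v_{k,c}).\<close>

definition path_vertices :: "nat \<Rightarrow> nat \<Rightarrow> (nat \<Rightarrow> nat) \<Rightarrow> (nat \<times> nat) set" where
  "path_vertices k i p =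
     {(i, c) | c. 1 \<le> c \<and> c \<le> p i} \<union>
     {(a, c) | a c. i < a \<and> a \<le> k \<and> p (a - 1) \<le> c \<and> c \<le> p a}"

definition path_sum :: "nat \<Rightarrow> nat \<Rightarrow> (nat \<Rightarrow> nat) \<Rightarrow> (nat \<times> nat \<Rightarrow> real) \<Rightarrow> real" where
  "path_sum k i p x = (\<Sum>a\<in>{i..k}. \<Sum>c\<in>{1..p a}. x (a, c))"

text \<open>Path(K): families of pairwise vertex-disjoint paths from the sources labelled
  [k] - K to the sinks labelled K - [k] (the family S assigns to each such source i its
  path S i).\<close>

definition path_families :: "nat \<Rightarrow> nat \<Rightarrow> nat set \<Rightarrow> (nat \<Rightarrow> nat \<Rightarrow> nat) set" where
  "path_families k n K =
     {S. (\<forall>i\<in>{1..k} - K. is_web_path k n i (S i) \<and> k + S i k \<in> K - {1..k})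
       \<and> (\<forall>i\<in>{1..k} - K. \<forall>j\<in>{1..k} - K. i \<noteq> j \<longrightarrow>
              path_vertices k i (S i) \<inter> path_vertices k j (S j) = {})}"

text \<open>x is a point of R^{inner regions}, i.e. it vanishes on the outer regions.\<close>

definition TropP :: "nat \<Rightarrow> nat \<Rightarrow> nat set \<Rightarrow> (nat \<times> nat \<Rightarrow> real) \<Rightarrow> real" where
  "TropP k n K x =
     Min ((\<lambda>S. \<Sum>i\<in>{1..k} - K. path_sum k i (S i) x) ` path_families k n K)"

definition k_subsets :: "nat \<Rightarrow> nat \<Rightarrow> nat set set" where
  "k_subsets k n = {K. K \<subseteq> {1..n} \<and> card K = k}"

definition web_fan :: "nat \<Rightarrow> nat \<Rightarrow> (nat \<times> nat \<Rightarrow> real) set set" where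
  "web_fan k n = linearity_domains (inner_regions k n) (k_subsets k n) (\<lambda>K x. TropP k n K x)"

definition coords2 :: "nat \<Rightarrow> (nat \<times> nat \<Rightarrow> real) \<Rightarrow> (nat \<Rightarrow> real)" where
  "coords2 n y = (\<lambda>m. if 1 \<le> m \<and> m \<le> n - 3 then y (1, Suc m) else 0)"

datatype ptree = Leaf | Node ptree ptree

fun leaves :: "ptree \<Rightarrow> nat" where
  "leaves Leaf = 1"
| "leaves (Node l r) = leaves l + leaves r"

fun internals :: "ptree \<Rightarrow> nat" where
  "internals Leaf = 0"
| "internals (Node l r) = internals l + 1 + internals r"

text \<open>In-order label of the root of a subtree whose internal vertices get labels off+1, off+2, ...\<close>

fun root_label :: "nat \<Rightarrow> ptree \<Rightarrow> nat" where
  "root_label off Leaf = 0"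
| "root_label off (Node l r) = off + internals l + 1"

text \<open>Pairs (i, j) of in-order labels with internal vertex i the parent of internal vertex j.\<close>

fun parent_child :: "nat \<Rightarrow> ptree \<Rightarrow> (nat \<times> nat) set" where
  "parent_child off Leaf = {}"
| "parent_child off (Node l r) =
     (let me = off + internals l + 1 in
       (if l = Leaf then {} else {(me, root_label off l)})
     \<union> (if r = Leaf then {} else {(me, root_label me r)})
     \<union> parent_child off l \<union> parent_child me r)"

definition SP_cone :: "nat \<Rightarrow> ptree \<Rightarrow> (nat \<Rightarrow> real) set" where
  "SP_cone d T = {x \<in> Vsp {1..d}. \<forall>(i, j) \<in> parent_child 0 T.
      (i < j \<longrightarrow> (\<Sum>m\<in>{i..<j}. x m) \<ge> 0) \<and> (j < i \<longrightarrow> (\<Sum>m\<in>{j..<i}. x m) \<le> 0)}"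

definition stanley_pitman_fan :: "nat \<Rightarrow> (nat \<Rightarrow> real) set set" where
  "stanley_pitman_fan d = {SP_cone d T | T. leaves T = d + 2}"

end

theory Submission
  imports Defs
begin

fun hpd :: "real \<Rightarrow> (nat \<Rightarrow> real) \<Rightarrow> nat \<Rightarrow> ptree \<Rightarrow> bool" where
  "hpd \<delta> f off Leaf = True"
| "hpd \<delta> f off (Node l r) =
     ((\<forall>q\<in>{off..<off + internals (Node l r)}. q \<noteq> off + internals l \<longrightarrow> f (off + internals l) + \<delta> \<le> f q)
      \<and> hpd \<delta> f off l \<and> hpd \<delta> f (Suc (off + internals l)) r)"

fun lca :: "nat \<Rightarrow> ptree \<Rightarrow> nat \<Rightarrow> nat \<Rightarrow> nat" where
  "lca off Leaf a b = a"
| "lca off (Node l r) a b =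
     (if b < off + internals l then lca off l a b
      else if off + internals l < a then lca (Suc (off + internals l)) r a b
      else off + internals l)"

fun dep :: "nat \<Rightarrow> ptree \<Rightarrow> nat \<Rightarrow> nat" where
  "dep off Leaf q = 0"
| "dep off (Node l r) q =
     (if q < off + internals l then Suc (dep off l q)
      else if off + internals l < q then Suc (dep (Suc (off + internals l)) r q)
      else 0)"

lemma leaves_internals: "leaves T = Suc (internals T)"
  by (induction T) auto

lemma hpd_cong:
  "(\<And>q. off \<le> q \<Longrightarrow> q < off + internals T \<Longrightarrow> f q = g q) \<Longrightarrow> hpd \<delta> f off T = hpd \<delta> g off T"
proof (induction T arbitrary: off)
  case Leaf
  then show ?case by simp
next
  case (Node l r)
  have A: "hpd \<delta> f off l = hpd \<delta> g off l"
    by (rule Node.IH(1)) (use Node.prems in auto)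
  have B: "hpd \<delta> f (Suc (off + internals l)) r = hpd \<delta> g (Suc (off + internals l)) r"
    by (rule Node.IH(2)) (use Node.prems in auto)
  have C: "f (off + internals l) = g (off + internals l)" using Node.prems by auto
  show ?case using A B C Node.prems by auto
qed

lemma hpd_shift: "hpd \<delta> (\<lambda>q. c + f q) off T = hpd \<delta> f off T"
  by (induction T arbitrary: off) auto

lemma hpd_root:
  assumes "hpd 0 f off (Node l r)" "off \<le> q" "q < off + internals (Node l r)"
  shows "f (off + internals l) \<le> f q"
  using assms by (cases "q = off + internals l") auto

lemma hpd_dep: "hpd 1 (\<lambda>q. real (dep off T q)) off T"
proof (induction T arbitrary: off)
  case Leaf
  then show ?case by simp
next
  case (Node l r)
  have A: "hpd 1 (\<lambda>q. real (dep off (Node l r) q)) off l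
        = hpd 1 (\<lambda>q. 1 + real (dep off l q)) off l"
    by (rule hpd_cong) auto
  have B: "hpd 1 (\<lambda>q. real (dep off (Node l r) q)) (Suc (off + internals l)) r
        = hpd 1 (\<lambda>q. 1 + real (dep (Suc (off + internals l)) r q)) (Suc (off + internals l)) r"
    by (rule hpd_cong) auto
  show ?case using A B Node.IH hpd_shift by auto
qed

lemma hpd_comb:
  assumes "hpd d1 f off T" "hpd d2 g off T" "c \<ge> 0"
  shows "hpd (d1 + c * d2) (\<lambda>q. f q + c * g q) off T"
  using assms
proof (induction T arbitrary: off)
  case Leaf
  then show ?case by simp
next
  case (Node l r)
  have "\<forall>q\<in>{off..<off + internals (Node l r)}. q \<noteq> off + internals l \<longrightarrow>
     f (off + internals l) + c * g (off + internals l) + (d1 + c * d2) \<le> f q + c * g q"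
  proof (intro ballI impI)
    fix q assume q: "q \<in> {off..<off + internals (Node l r)}" "q \<noteq> off + internals l"
    have 1: "f (off + internals l) + d1 \<le> f q" using Node.prems q by auto
    have 2: "g (off + internals l) + d2 \<le> g q" using Node.prems q by auto
    have "c * (g (off + internals l) + d2) \<le> c * g q" using 2 Node.prems(3) by (rule mult_left_mono)
    then show "f (off + internals l) + c * g (off + internals l) + (d1 + c * d2) \<le> f q + c * g q"
      using 1 by (simp add: algebra_simps)
  qed
  then show ?case using Node by auto
qed

lemma hpd_pert:
  assumes "hpd d f off T" "\<And>q. off \<le> q \<Longrightarrow> q < off + internals T \<Longrightarrow> \<bar>g q - f q\<bar> < d / 2"
  shows "hpd 0 g off T"
  using assms
proof (induction T arbitrary: off)
  case Leaf
  then show ?case by simp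
next
  case (Node l r)
  have L: "hpd 0 g off l" by (rule Node.IH(1)) (use Node.prems in auto)
  have R: "hpd 0 g (Suc (off + internals l)) r" by (rule Node.IH(2)) (use Node.prems in auto)
  have "\<forall>q\<in>{off..<off + internals (Node l r)}. q \<noteq> off + internals l \<longrightarrow>
     g (off + internals l) + 0 \<le> g q"
  proof (intro ballI impI)
    fix q assume q: "q \<in> {off..<off + internals (Node l r)}" "q \<noteq> off + internals l"
    have 1: "f (off + internals l) + d \<le> f q" using Node.prems q by auto
    have 2: "\<bar>g q - f q\<bar> < d/2" using Node.prems(2)[of q] q by auto
    have 3: "\<bar>g (off + internals l) - f (off + internals l)\<bar> < d/2" using Node.prems(2) by auto
    show "g (off + internals l) + 0 \<le> g q" using 1 2 3 by linarith
  qed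
  then show ?case using L R by simp
qed

lemma cartesian: "\<exists>T. internals T = len \<and> hpd 0 f off T"
proof (induction len arbitrary: off rule: less_induct)
  case (less len)
  show ?case
  proof (cases len)
    case 0
    then show ?thesis by (intro exI[of _ Leaf]) auto
  next
    case (Suc k)
    define S where "S = {off..off + k}"
    have "finite (f ` S)" "f ` S \<noteq> {}" unfolding S_def by auto
    then have "Min (f ` S) \<in> f ` S" by (rule Min_in)
    then obtain \<rho> where \<rho>: "\<rho> \<in> S" "f \<rho> = Min (f ` S)" by auto
    have \<rho>min: "\<forall>q\<in>S. f \<rho> \<le> f q" using \<rho> \<open>finite (f ` S)\<close> by auto
    have "\<rho> - off < len" "off + k - \<rho> < len" using \<rho>(1) Suc unfolding S_def by auto
    then obtain Tl Tr where Tl: "internals Tl = \<rho> - off" "hpd 0 f off Tl"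
      and Tr: "internals Tr = off + k - \<rho>" "hpd 0 f (Suc \<rho>) Tr"
      using less.IH by meson
    have e: "off + internals Tl = \<rho>" using Tl \<rho>(1) unfolding S_def by auto
    show ?thesis
      apply (intro exI[of _ "Node Tl Tr"])
      using Tl Tr \<rho> \<rho>min e Suc unfolding S_def by auto
  qed
qed

lemma lca_in:
  "off \<le> a \<Longrightarrow> a \<le> b \<Longrightarrow> b < off + internals T \<Longrightarrow> a \<le> lca off T a b \<and> lca off T a b \<le> b"
  by (induction T arbitrary: off) auto

lemma lca_min:
  "hpd 0 f off T \<Longrightarrow> off \<le> a \<Longrightarrow> a \<le> q \<Longrightarrow> q \<le> b \<Longrightarrow> b < off + internals T
   \<Longrightarrow> f (lca off T a b) \<le> f q"
proof (induction T arbitrary: off)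
  case Leaf
  then show ?case by simp
next
  case (Node l r)
  show ?case
  proof (cases "b < off + internals l")
    case True
    then show ?thesis using Node by auto
  next
    case False
    show ?thesis
    proof (cases "off + internals l < a")
      case True
      then show ?thesis using Node False by auto
    next
      case F2: False
      have "f (off + internals l) \<le> f q"
        by (rule hpd_root[OF Node.prems(1)]) (use Node.prems in auto)
      then show ?thesis using False F2 by simp
    qed
  qed
qed

lemma lca_conv:
  "(\<And>a b q. off \<le> a \<Longrightarrow> a \<le> q \<Longrightarrow> q \<le> b \<Longrightarrow> b < off + internals T \<Longrightarrow> f (lca off T a b) \<le> f q)
   \<Longrightarrow> hpd 0 f off T"
proof (induction T arbitrary: off)
  case Leaf
  then show ?case by simp
next
  case (Node l r)
  have L: "hpd 0 f off l"
  proof (rule Node.IH(1))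
    fix a b q assume "off \<le> a" "a \<le> q" "q \<le> b" "b < off + internals l"
    then show "f (lca off l a b) \<le> f q" using Node.prems[of a q b] by auto
  qed
  have R: "hpd 0 f (Suc (off + internals l)) r"
  proof (rule Node.IH(2))
    fix a b q assume "Suc (off + internals l) \<le> a" "a \<le> q" "q \<le> b" "b < Suc (off + internals l) + internals r"
    then show "f (lca (Suc (off + internals l)) r a b) \<le> f q" using Node.prems[of a q b] by auto
  qed
  have "\<forall>q\<in>{off..<off + internals (Node l r)}. q \<noteq> off + internals l \<longrightarrow>
     f (off + internals l) + 0 \<le> f q"
  proof (intro ballI impI)
    fix q assume q: "q \<in> {off..<off + internals (Node l r)}"
    have "f (lca off (Node l r) off (off + internals l + internals r)) \<le> f q"
      using Node.prems[of off q "off + internals l + internals r"] q by auto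
    then show "f (off + internals l) + 0 \<le> f q" by simp
  qed
  then show ?case using L R by simp
qed

lemma pc_range:
  "(i, j) \<in> parent_child off T \<Longrightarrow> off < i \<and> i \<le> off + internals T \<and> off < j \<and> j \<le> off + internals T \<and> i \<noteq> j"
proof (induction T arbitrary: off)
  case Leaf
  then show ?case by simp
next
  case (Node l r)
  have rl: "l \<noteq> Leaf \<Longrightarrow> off < root_label off l \<and> root_label off l < off + internals l + 1" by (cases l) auto
  have rr: "r \<noteq> Leaf \<Longrightarrow> off + internals l + 1 < root_label (off + internals l + 1) r \<and>
     root_label (off + internals l + 1) r \<le> off + internals l + 1 + internals r" by (cases r) auto
  have "(i, j) \<in> (if l = Leaf then {} else {(off + internals l + 1, root_label off l)})
     \<union> (if r = Leaf then {} else {(off + internals l + 1, root_label (off + internals l + 1) r)})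
     \<union> parent_child off l \<union> parent_child (off + internals l + 1) r"
    using Node.prems by (simp only: parent_child.simps Let_def)
  then show ?case
  proof (elim UnE)
    assume "(i, j) \<in> (if l = Leaf then {} else {(off + internals l + 1, root_label off l)})"
    then show ?thesis using rl by (auto split: if_splits)
  next
    assume "(i, j) \<in> (if r = Leaf then {} else {(off + internals l + 1, root_label (off + internals l + 1) r)})"
    then show ?thesis using rr by (auto split: if_splits)
  next
    assume "(i, j) \<in> parent_child off l"
    then show ?thesis using Node.IH(1)[of off] by auto
  next
    assume "(i, j) \<in> parent_child (off + internals l + 1) r"
    then show ?thesis using Node.IH(2)[of "off + internals l + 1"] by auto
  qed
qed

lemma pc_hpd:
  "(\<forall>(i, j)\<in>parent_child off T. f (i - 1) \<le> f (j - 1)) \<longleftrightarrow> hpd 0 f off T"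
proof (induction T arbitrary: off)
  case Leaf
  then show ?case by simp
next
  case (Node l r)
  define me where "me = off + internals l + 1"
  have pcN: "parent_child off (Node l r) =
       (if l = Leaf then {} else {(me, root_label off l)})
     \<union> (if r = Leaf then {} else {(me, root_label me r)})
     \<union> parent_child off l \<union> parent_child me r" by (simp add: me_def Let_def)
  have me1: "me - 1 = off + internals l" by (simp add: me_def)
  have ih1: "(\<forall>(i, j)\<in>parent_child off l. f (i - 1) \<le> f (j - 1)) = hpd 0 f off l" by (rule Node.IH(1))
  have ih2: "(\<forall>(i, j)\<in>parent_child me r. f (i - 1) \<le> f (j - 1)) = hpd 0 f (Suc (off + internals l)) r"
    using Node.IH(2)[of me] by (simp add: me_def)
  show ?case
  proof
    assume H: "\<forall>(i, j)\<in>parent_child off (Node l r). f (i - 1) \<le> f (j - 1)"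
    have hl: "hpd 0 f off l" using H ih1 pcN by auto
    have hr: "hpd 0 f (Suc (off + internals l)) r" using H ih2 pcN by auto
    have "\<forall>q\<in>{off..<off + internals (Node l r)}. q \<noteq> off + internals l \<longrightarrow> f (off + internals l) + 0 \<le> f q"
    proof (intro ballI impI)
      fix q assume q: "q \<in> {off..<off + internals (Node l r)}" "q \<noteq> off + internals l"
      show "f (off + internals l) + 0 \<le> f q"
      proof (cases "q < off + internals l")
        case True
        then obtain l1 r1 where l: "l = Node l1 r1" using q by (cases l) auto
        have e: "(me, root_label off l) \<in> parent_child off (Node l r)" using pcN l by auto
        have 1: "f (off + internals l) \<le> f (off + internals l1)"
          using H e l me1 by auto
        have 2: "f (off + internals l1) \<le> f q"
          using hpd_root[of f off l1 r1 q] hl l q True by auto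
        show ?thesis using 1 2 by simp
      next
        case False
        then have qq: "Suc (off + internals l) \<le> q" "q < Suc (off + internals l) + internals r"
          using q by auto
        then obtain l1 r1 where r: "r = Node l1 r1" by (cases r) auto
        have e: "(me, root_label me r) \<in> parent_child off (Node l r)" using pcN r by auto
        have 1: "f (off + internals l) \<le> f (Suc (off + internals l) + internals l1)"
          using H e r me1 by (auto simp: me_def)
        have 2: "f (Suc (off + internals l) + internals l1) \<le> f q"
          using hpd_root[of f "Suc (off + internals l)" l1 r1 q] hr r qq by auto
        show ?thesis using 1 2 by simp
      qed
    qed
    then show "hpd 0 f off (Node l r)" using hl hr by simp
  next
    assume H: "hpd 0 f off (Node l r)"
    have hl: "hpd 0 f off l" and hr: "hpd 0 f (Suc (off + internals l)) r" using H by auto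
    have e1: "l \<noteq> Leaf \<Longrightarrow> f (me - 1) \<le> f (root_label off l - 1)"
    proof -
      assume "l \<noteq> Leaf"
      then obtain l1 r1 where l: "l = Node l1 r1" by (cases l) auto
      show ?thesis using hpd_root[OF H, of "off + internals l1"] l me1 by simp
    qed
    have e2: "r \<noteq> Leaf \<Longrightarrow> f (me - 1) \<le> f (root_label me r - 1)"
    proof -
      assume "r \<noteq> Leaf"
      then obtain l1 r1 where r: "r = Node l1 r1" by (cases r) auto
      show ?thesis using hpd_root[OF H, of "me + internals l1"] r me1 by (simp add: me_def)
    qed
    show "\<forall>(i, j)\<in>parent_child off (Node l r). f (i - 1) \<le> f (j - 1)"
      unfolding pcN using e1 e2 hl hr ih1 ih2 by (auto split: if_splits)
  qed
qed

definition Px :: "(nat \<Rightarrow> real) \<Rightarrow> nat \<Rightarrow> real" where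
  "Px x m = (\<Sum>l\<in>{1..m}. x l)"

lemma sum_interval:
  assumes "1 \<le> i" "i \<le> j"
  shows "(\<Sum>m\<in>{i..<j}. x m) = Px x (j - 1) - Px x (i - 1)"
proof -
  have a: "{1..j - 1} = {1..<j}" "{1..i - 1} = {1..<i}" using assms by auto
  have "sum x {1..<j} = sum x {1..<i} + sum x {i..<j}"
    using assms by (simp add: sum.atLeastLessThan_concat)
  then show ?thesis unfolding Px_def a by simp
qed

lemma SP_cone_char: "SP_cone d T = {x \<in> Vsp {1..d}. hpd 0 (Px x) 0 T}"
proof -
  have key0: "(\<forall>(i, j) \<in> parent_child 0 T.
      (i < j \<longrightarrow> (\<Sum>m\<in>{i..<j}. x m) \<ge> 0) \<and> (j < i \<longrightarrow> (\<Sum>m\<in>{j..<i}. x m) \<le> 0))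
     \<longleftrightarrow> (\<forall>(i, j)\<in>parent_child 0 T. Px x (i - 1) \<le> Px x (j - 1))" for x
  proof -
    have "((i < j \<longrightarrow> (\<Sum>m\<in>{i..<j}. x m) \<ge> 0) \<and> (j < i \<longrightarrow> (\<Sum>m\<in>{j..<i}. x m) \<le> 0))
       \<longleftrightarrow> Px x (i - 1) \<le> Px x (j - 1)" if "(i, j) \<in> parent_child 0 T" for i j
    proof -
      have r: "0 < i" "0 < j" "i \<noteq> j" using pc_range[OF that] by auto
      show ?thesis
      proof (cases "i < j")
        case True
        then show ?thesis using sum_interval[of i j x] r by auto
      next
        case False
        then show ?thesis using sum_interval[of j i x] r by auto
      qed
    qed
    then show ?thesis by blast
  qed
  have key: "(\<forall>(i, j) \<in> parent_child 0 T.
      (i < j \<longrightarrow> (\<Sum>m\<in>{i..<j}. x m) \<ge> 0) \<and> (j < i \<longrightarrow> (\<Sum>m\<in>{j..<i}. x m) \<le> 0))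
     \<longleftrightarrow> hpd 0 (Px x) 0 T" for x
    using key0[of x] pc_hpd[where off=0 and f="Px x" and T=T] by simp
  show ?thesis unfolding SP_cone_def using key by blast
qed

definition Q :: "(nat \<times> nat \<Rightarrow> real) \<Rightarrow> nat \<Rightarrow> real" where
  "Q y m = (\<Sum>c\<in>{2..Suc m}. y (1, c))"

definition lo :: "nat set \<Rightarrow> nat" where
  "lo K = (if 1 \<in> K then 0 else Min K - 2)"

definition hi :: "nat set \<Rightarrow> nat" where
  "hi K = (if 1 \<in> K then 0 else Max K - 3)"

definition PV :: "nat \<Rightarrow> nat set \<Rightarrow> (nat \<times> nat \<Rightarrow> real) \<Rightarrow> real set" where
  "PV n K y = (\<lambda>S. \<Sum>i\<in>{1..2} - K. path_sum 2 i (S i) y) ` path_families 2 n K"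

lemma Q0[simp]: "Q y 0 = 0" by (simp add: Q_def)

lemma R_char: "inner_regions 2 n = {(1, c) | c. 2 \<le> c \<and> c \<le> n - 2}"
  unfolding inner_regions_def by auto

lemma vsp_zero: "y \<in> Vsp (inner_regions 2 n) \<Longrightarrow> y (2, c) = 0 \<and> y (1, 1) = 0"
  unfolding Vsp_def inner_regions_def by auto

lemma ps2: "y \<in> Vsp (inner_regions 2 n) \<Longrightarrow> path_sum 2 2 p y = 0"
  unfolding path_sum_def using vsp_zero[of y n] by simp

lemma ps1: assumes "y \<in> Vsp (inner_regions 2 n)" "1 \<le> p 1"
  shows "path_sum 2 1 p y = Q y (p 1 - 1)"
proof -
  have a: "{1..2::nat} = {1, 2}" by auto
  have b: "{1..p 1} = insert 1 {2..Suc (p 1 - 1)}" using assms(2) by auto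
  have s2: "(\<Sum>c\<in>{1..p 2}. y (2, c)) = 0" using vsp_zero[OF assms(1)] by simp
  have s1: "(\<Sum>c\<in>{1..p 1}. y (1, c)) = Q y (p 1 - 1)"
  proof -
    have z: "y (Suc 0, Suc 0) = 0" using vsp_zero[OF assms(1)] by simp
    show ?thesis unfolding Q_def b by (subst sum.insert) (auto simp: z)
  qed
  show ?thesis unfolding path_sum_def a using s1 s2 by simp
qed

lemma wp1: "is_web_path 2 n 1 p \<Longrightarrow> 1 \<le> p 1 \<and> p 1 \<le> p 2 \<and> p 2 \<le> n - 2"
proof -
  have e: "{1..<2::nat} = {1}" by auto
  show "is_web_path 2 n 1 p \<Longrightarrow> 1 \<le> p 1 \<and> p 1 \<le> p 2 \<and> p 2 \<le> n - 2"
    unfolding is_web_path_def e by (simp add: numeral_2_eq_2)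
qed

lemma K_cases:
  assumes "K \<in> k_subsets 2 n"
  obtains i j where "K = {i, j}" "i < j" "1 \<le> i" "j \<le> n"
proof -
  obtain i j where ij: "K = {i, j}" "i \<noteq> j" using assms unfolding k_subsets_def
    by (auto simp: card_2_iff)
  have s: "K \<subseteq> {1..n}" using assms unfolding k_subsets_def by auto
  show ?thesis
  proof (cases "i < j")
    case True
    then show ?thesis using that ij s by auto
  next
    case False
    then show ?thesis using that[of j i] ij s by (auto simp: insert_commute)
  qed
qed

lemma PV_eq:
  assumes n: "n \<ge> 4" and K: "K \<in> k_subsets 2 n" and y: "y \<in> Vsp (inner_regions 2 n)"
  shows "PV n K y = Q y ` {lo K..hi K}"
proof -
  obtain i j where ij: "K = {i, j}" "i < j" "1 \<le> i" "j \<le> n" using K_cases[OF K] by blast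
  have mn: "Min K = i" "Max K = j" using ij by auto
  have two: "{1..2::nat} = {1, 2}" by auto
  show ?thesis
  proof (cases "i = 1")
    case True
    have lh: "lo K = 0" "hi K = 0" unfolding lo_def hi_def using ij True by auto
    show ?thesis
    proof (cases "j = 2")
      case True
      have d: "{1..2} - K = {}" using ij \<open>i = 1\<close> True by auto
      have "(\<lambda>_ _. 0) \<in> path_families 2 n K" unfolding path_families_def d by simp
      then show ?thesis unfolding PV_def lh d by auto
    next
      case False
      have d: "{1..2} - K = {2}" using ij \<open>i = 1\<close> False by auto
      have "(\<lambda>_ _. j - 2) \<in> path_families 2 n K"
        unfolding path_families_def d is_web_path_def using ij \<open>i = 1\<close> False by auto
      then show ?thesis unfolding PV_def lh d using ps2[OF y] by auto
    qed
  next
    case False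
    note i1 = False
    show ?thesis
    proof (cases "i = 2")
      case True
      have lh: "lo K = 0" "hi K = j - 3" unfolding lo_def hi_def using ij True mn by auto
      have d: "{1..2} - K = {1}" using ij True by auto
      have d2: "K - {1..2} = {j}" using ij True by auto
      show ?thesis
      proof
        show "PV n K y \<subseteq> Q y ` {lo K..hi K}"
        proof
          fix v assume "v \<in> PV n K y"
          then obtain S where S: "S \<in> path_families 2 n K" "v = path_sum 2 1 (S 1) y"
            unfolding PV_def d by auto
          have w: "is_web_path 2 n 1 (S 1)" "2 + S 1 2 = j"
            using S(1) unfolding path_families_def d d2 by auto
          have w2: "1 \<le> S 1 1" "S 1 1 \<le> S 1 2" using wp1[OF w(1)] by auto
          have "v = Q y (S 1 1 - 1)" using S(2) ps1[where p="S 1", OF y w2(1)] by simp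
          moreover have "S 1 1 - 1 \<in> {lo K..hi K}" using w w2 lh by auto
          ultimately show "v \<in> Q y ` {lo K..hi K}" by blast
        qed
      next
        show "Q y ` {lo K..hi K} \<subseteq> PV n K y"
        proof
          fix v assume "v \<in> Q y ` {lo K..hi K}"
          then obtain m where m: "m \<le> j - 3" "v = Q y m" using lh by auto
          define S :: "nat \<Rightarrow> nat \<Rightarrow> nat" where "S = (\<lambda>_ a. if a = 1 then Suc m else j - 2)"
          have "S \<in> path_families 2 n K"
            unfolding path_families_def d d2 is_web_path_def S_def using m ij n \<open>i = 2\<close> by auto
          moreover have "path_sum 2 1 (S 1) y = v" using ps1[OF y, of "S 1"] m by (simp add: S_def)
          ultimately show "v \<in> PV n K y" unfolding PV_def d by force
        qed
      qed
    next
      case False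
      have i3: "3 \<le> i" using i1 False ij by auto
      have lh: "lo K = i - 2" "hi K = j - 3" unfolding lo_def hi_def using ij i3 mn by auto
      have d: "{1..2} - K = {1, 2}" using ij i3 by auto
      have d2: "K - {1..2} = {i, j}" using ij i3 by auto
      have sum12: "(\<Sum>t\<in>{1, 2}. f t) = f 1 + f (2::nat)" for f :: "nat \<Rightarrow> real" by simp
      show ?thesis
      proof
        show "PV n K y \<subseteq> Q y ` {lo K..hi K}"
        proof
          fix v assume "v \<in> PV n K y"
          then obtain S where S: "S \<in> path_families 2 n K"
              "v = path_sum 2 1 (S 1) y + path_sum 2 2 (S 2) y"
            unfolding PV_def d sum12 by auto
          have w: "is_web_path 2 n 1 (S 1)" "2 + S 1 2 \<in> {i, j}"
                  "is_web_path 2 n 2 (S 2)" "2 + S 2 2 \<in> {i, j}"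
            using S(1) unfolding path_families_def d d2 by auto
          have disj: "path_vertices 2 1 (S 1) \<inter> path_vertices 2 2 (S 2) = {}"
            using S(1) unfolding path_families_def d by auto
          have w2: "1 \<le> S 1 1" "S 1 1 \<le> S 1 2" using wp1[OF w(1)] by auto
          have "(2, S 1 1) \<in> path_vertices 2 1 (S 1)" unfolding path_vertices_def using w2 by auto
          then have "(2, S 1 1) \<notin> path_vertices 2 2 (S 2)" using disj by blast
          then have gt: "S 2 2 < S 1 1" unfolding path_vertices_def using w2 by auto
          have e1: "2 + S 1 2 = j" using w gt w2 ij by auto
          have e2: "2 + S 2 2 = i" using w gt w2 ij by auto
          have "v = Q y (S 1 1 - 1)" using S(2) ps1[where p="S 1", OF y w2(1)] ps2[OF y] by simp
          moreover have "S 1 1 - 1 \<in> {lo K..hi K}" using e1 e2 gt w2 lh by auto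
          ultimately show "v \<in> Q y ` {lo K..hi K}" by blast
        qed
      next
        show "Q y ` {lo K..hi K} \<subseteq> PV n K y"
        proof
          fix v assume "v \<in> Q y ` {lo K..hi K}"
          then obtain m where m: "i - 2 \<le> m" "m \<le> j - 3" "v = Q y m" using lh by auto
          define S :: "nat \<Rightarrow> nat \<Rightarrow> nat" where
            "S = (\<lambda>t a. if t = 1 then (if a = 1 then Suc m else j - 2) else i - 2)"
          have pv1: "path_vertices 2 1 (S 1) = {(1, c) | c. 1 \<le> c \<and> c \<le> Suc m} \<union> {(2, c) | c. Suc m \<le> c \<and> c \<le> j - 2}"
            unfolding path_vertices_def S_def using m by (auto simp: numeral_2_eq_2 split: if_splits)
          have pv2: "path_vertices 2 2 (S 2) = {(2, c) | c. 1 \<le> c \<and> c \<le> i - 2}"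
            unfolding path_vertices_def S_def by auto
          have dj: "path_vertices 2 1 (S 1) \<inter> path_vertices 2 2 (S 2) = {}"
            unfolding pv1 pv2 using m i3 by auto
          have "S \<in> path_families 2 n K"
            unfolding path_families_def d d2 mem_Collect_eq
          proof (intro conjI ballI impI)
            fix t assume t: "t \<in> {1, 2::nat}"
            show "is_web_path 2 n t (S t)" using t m ij n i3
              unfolding is_web_path_def S_def by auto
            show "2 + S t 2 \<in> {i, j}" using t m ij i3 unfolding S_def by auto
          next
            fix t u assume "t \<in> {1, 2::nat}" "u \<in> {1, 2::nat}" "t \<noteq> u"
            then show "path_vertices 2 t (S t) \<inter> path_vertices 2 u (S u) = {}"
              using dj by auto
          qed
          moreover have "path_sum 2 1 (S 1) y + path_sum 2 2 (S 2) y = v"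
            using ps1[OF y, of "S 1"] ps2[OF y] m by (simp add: S_def)
          ultimately show "v \<in> PV n K y" unfolding PV_def d sum12 by force
        qed
      qed
    qed
  qed
qed

lemma lohi:
  assumes "n \<ge> 4" "K \<in> k_subsets 2 n"
  shows "lo K \<le> hi K \<and> hi K \<le> n - 3"
proof -
  obtain i j where ij: "K = {i, j}" "i < j" "1 \<le> i" "j \<le> n" using K_cases[OF assms(2)] by blast
  have mn: "Min K = i" "Max K = j" using ij by auto
  show ?thesis unfolding lo_def hi_def mn using ij by auto
qed

lemma lohi_surj:
  assumes "n \<ge> 4" "a \<le> b" "b \<le> n - 3"
  shows "\<exists>K\<in>k_subsets 2 n. lo K = a \<and> hi K = b"
proof -
  define K where "K = {a + 2, b + 3}"
  have ne: "a + 2 \<noteq> b + 3" using assms by auto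
  have c: "card K = 2" unfolding K_def using ne by auto
  have mn: "Min K = a + 2" "Max K = b + 3" unfolding K_def using assms by auto
  have "K \<in> k_subsets 2 n" unfolding k_subsets_def using c assms by (auto simp: K_def)
  moreover have "lo K = a" "hi K = b" unfolding lo_def hi_def mn by (auto simp: K_def)
  ultimately show ?thesis by blast
qed

lemma TropP_eq:
  assumes "n \<ge> 4" "K \<in> k_subsets 2 n" "y \<in> Vsp (inner_regions 2 n)"
  shows "TropP 2 n K y = Min (Q y ` {lo K..hi K})"
  using PV_eq[OF assms] unfolding TropP_def PV_def by simp

definition qa :: "nat \<Rightarrow> nat \<times> nat \<Rightarrow> real" where
  "qa m = (\<lambda>r. if r \<in> Pair 1 ` {2..Suc m} then 1 else 0)"

definition ET :: "nat \<Rightarrow> ptree \<Rightarrow> (nat \<times> nat \<Rightarrow> real) set" where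
  "ET n T = {y \<in> Vsp (inner_regions 2 n). hpd 0 (Q y) 0 T}"

lemma R_eq: "inner_regions 2 n = Pair 1 ` {2..n - 2}"
  unfolding inner_regions_def by auto

lemma R_fin: "finite (inner_regions 2 n)"
  unfolding R_eq by simp

lemma Q_lf:
  assumes "m \<le> n - 3"
  shows "Q y m = (\<Sum>r\<in>inner_regions 2 n. qa m r * y r)"
proof -
  have sub: "Pair 1 ` {2..Suc m} \<subseteq> inner_regions 2 n" unfolding R_eq using assms by auto
  have "(\<Sum>r\<in>inner_regions 2 n. qa m r * y r)
      = (\<Sum>r\<in>inner_regions 2 n. if r \<in> Pair 1 ` {2..Suc m} then y r else 0)"
    unfolding qa_def by (intro sum.cong) auto
  also have "\<dots> = (\<Sum>r\<in>inner_regions 2 n \<inter> Pair 1 ` {2..Suc m}. y r)"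
    by (rule sum.inter_restrict[symmetric]) (rule R_fin)
  also have "inner_regions 2 n \<inter> Pair 1 ` {2..Suc m} = Pair 1 ` {2..Suc m}" using sub by blast
  also have "(\<Sum>r\<in>Pair 1 ` {2..Suc m}. y r) = (\<Sum>c\<in>{2..Suc m}. y (1, c))"
    by (subst sum.reindex) (auto simp: inj_on_def)
  finally show ?thesis unfolding Q_def by simp
qed

lemma Min_char:
  assumes "a \<le> l" "l \<le> b"
  shows "Min (f ` {a..b}) = f l \<longleftrightarrow> (\<forall>q\<in>{a..b}. f l \<le> f (q::nat))"
proof -
  have "finite (f ` {a..b})" "f ` {a..b} \<noteq> {}" using assms by auto
  then have "(f l = Min (f ` {a..b})) = (f l \<in> f ` {a..b} \<and> (\<forall>v\<in>f ` {a..b}. f l \<le> v))"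
    by (rule eq_Min_iff)
  then show ?thesis using assms by auto
qed

lemma ET_dom:
  assumes n: "n \<ge> 4" and T: "internals T = Suc (n - 3)"
  shows "ET n T = {y \<in> Vsp (inner_regions 2 n). \<forall>K\<in>k_subsets 2 n.
           TropP 2 n K y = (\<Sum>r\<in>inner_regions 2 n. qa (lca 0 T (lo K) (hi K)) r * y r)}"
proof -
  have "hpd 0 (Q y) 0 T \<longleftrightarrow> (\<forall>K\<in>k_subsets 2 n.
           TropP 2 n K y = (\<Sum>r\<in>inner_regions 2 n. qa (lca 0 T (lo K) (hi K)) r * y r))"
    if y: "y \<in> Vsp (inner_regions 2 n)" for y
  proof -
    have eqK: "TropP 2 n K y = (\<Sum>r\<in>inner_regions 2 n. qa (lca 0 T (lo K) (hi K)) r * y r)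
        \<longleftrightarrow> (\<forall>q\<in>{lo K..hi K}. Q y (lca 0 T (lo K) (hi K)) \<le> Q y q)"
      if K: "K \<in> k_subsets 2 n" for K
    proof -
      have lh: "lo K \<le> hi K" "hi K \<le> n - 3" using lohi[OF n K] by auto
      have li: "lo K \<le> lca 0 T (lo K) (hi K) \<and> lca 0 T (lo K) (hi K) \<le> hi K"
        using lca_in[of 0 "lo K" "hi K" T] lh T by auto
      have "(\<Sum>r\<in>inner_regions 2 n. qa (lca 0 T (lo K) (hi K)) r * y r) = Q y (lca 0 T (lo K) (hi K))"
        using Q_lf[of "lca 0 T (lo K) (hi K)" n y] li lh by simp
      then show ?thesis using TropP_eq[OF n K y] Min_char[of "lo K" "lca 0 T (lo K) (hi K)" "hi K" "Q y"] li
        by simp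
    qed
    show ?thesis
    proof
      assume h: "hpd 0 (Q y) 0 T"
      show "\<forall>K\<in>k_subsets 2 n.
           TropP 2 n K y = (\<Sum>r\<in>inner_regions 2 n. qa (lca 0 T (lo K) (hi K)) r * y r)"
      proof
        fix K assume K: "K \<in> k_subsets 2 n"
        have lh: "lo K \<le> hi K" "hi K \<le> n - 3" using lohi[OF n K] by auto
        have "\<forall>q\<in>{lo K..hi K}. Q y (lca 0 T (lo K) (hi K)) \<le> Q y q"
          using lca_min[OF h] lh T by auto
        then show "TropP 2 n K y = (\<Sum>r\<in>inner_regions 2 n. qa (lca 0 T (lo K) (hi K)) r * y r)"
          using eqK[OF K] by simp
      qed
    next
      assume h: "\<forall>K\<in>k_subsets 2 n.
           TropP 2 n K y = (\<Sum>r\<in>inner_regions 2 n. qa (lca 0 T (lo K) (hi K)) r * y r)"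
      show "hpd 0 (Q y) 0 T"
      proof (rule lca_conv)
        fix a b q assume abq: "0 \<le> a" "a \<le> q" "q \<le> b" "b < 0 + internals T"
        obtain K where K: "K \<in> k_subsets 2 n" "lo K = a" "hi K = b"
          using lohi_surj[OF n, of a b] abq T by auto
        show "Q y (lca 0 T a b) \<le> Q y q" using h K eqK[OF K(1)] abq by auto
      qed
    qed
  qed
  then show ?thesis unfolding ET_def by auto
qed

lemma Q_add: "Q (\<lambda>r. y r + c * z r) m = Q y m + c * Q z m"
  unfolding Q_def by (simp only: sum.distrib sum_distrib_left)

lemma Q_pert:
  assumes "\<forall>r\<in>inner_regions 2 n. \<bar>y r - y0 r\<bar> < e" "m \<le> n - 3"
  shows "\<bar>Q y m - Q y0 m\<bar> \<le> real m * e"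
proof -
  have "\<bar>Q y m - Q y0 m\<bar> = \<bar>\<Sum>c\<in>{2..Suc m}. y (1, c) - y0 (1, c)\<bar>"
    unfolding Q_def by (simp add: sum_subtractf)
  also have "\<dots> \<le> (\<Sum>c\<in>{2..Suc m}. \<bar>y (1, c) - y0 (1, c)\<bar>)" by (rule sum_abs)
  also have "\<dots> \<le> (\<Sum>c\<in>{2..Suc m}. e)"
  proof (rule sum_mono)
    fix c assume "c \<in> {2..Suc m}"
    then have "(1, c) \<in> inner_regions 2 n" using assms(2) unfolding R_eq by auto
    then show "\<bar>y (1, c) - y0 (1, c)\<bar> \<le> e" using assms(1) by fastforce
  qed
  also have "\<dots> = real m * e" by simp
  finally show ?thesis .
qed

lemma Q_tele: "(\<Sum>c\<in>{2..Suc m}. g (c - 1) - g (c - 2)) = g m - (g 0 :: real)"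
proof (induction m)
  case 0
  then show ?case by simp
next
  case (Suc m)
  have "{2..Suc (Suc m)} = insert (Suc (Suc m)) {2..Suc m}" by auto
  then show ?case using Suc by simp
qed

lemma strict_point:
  assumes n: "n \<ge> 4" and T: "internals T = Suc (n - 3)"
  shows "\<exists>z \<in> Vsp (inner_regions 2 n). hpd 1 (Q z) 0 T"
proof -
  define g where "g = (\<lambda>q. real (dep 0 T q) - real (dep 0 T 0))"
  define z :: "nat \<times> nat \<Rightarrow> real" where "z = (\<lambda>(a, c). if a = 1 \<and> 2 \<le> c \<and> c \<le> n - 2 then g (c - 1) - g (c - 2) else 0)"
  have zV: "z \<in> Vsp (inner_regions 2 n)" unfolding Vsp_def z_def inner_regions_def by auto
  have Qz: "Q z q = g q" if "q \<le> n - 3" for q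
  proof -
    have "Q z q = (\<Sum>c\<in>{2..Suc q}. g (c - 1) - g (c - 2))"
      unfolding Q_def z_def using that by (intro sum.cong) auto
    then show ?thesis using Q_tele[of g q] by (simp add: g_def)
  qed
  have "hpd 1 (Q z) 0 T = hpd 1 (\<lambda>q. - real (dep 0 T 0) + real (dep 0 T q)) 0 T"
    by (rule hpd_cong) (use T Qz in \<open>auto simp: g_def\<close>)
  also have "\<dots> = True"
    using hpd_shift[of 1 "- real (dep 0 T 0)" "\<lambda>q. real (dep 0 T q)" 0 T] hpd_dep[of 0 T] by simp
  finally show ?thesis using zV by blast
qed

lemma ET_int:
  assumes n: "n \<ge> 4" and T: "internals T = Suc (n - 3)"
  shows "has_nonempty_interior (inner_regions 2 n) (ET n T)"
proof -
  obtain z where z: "z \<in> Vsp (inner_regions 2 n)" "hpd 1 (Q z) 0 T" using strict_point[OF n T] by blast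
  define e where "e = 1 / (2 * (real (n - 3) + 1))"
  have e0: "e > 0" unfolding e_def by simp
  have key: "real m * e < 1 / 2" if "m \<le> n - 3" for m
  proof -
    have "real m * e \<le> real (n - 3) * e" using that e0 by (intro mult_right_mono) auto
    also have "\<dots> < 1/2" unfolding e_def by (simp add: field_simps)
    finally show ?thesis .
  qed
  have "y \<in> ET n T" if y: "y \<in> Vsp (inner_regions 2 n)" "\<forall>r\<in>inner_regions 2 n. \<bar>y r - z r\<bar> < e" for y
  proof -
    have "hpd 0 (Q y) 0 T"
    proof (rule hpd_pert[OF z(2)])
      fix q assume "0 \<le> q" "q < 0 + internals T"
      then have q: "q \<le> n - 3" using T by auto
      show "\<bar>Q y q - Q z q\<bar> < 1 / 2" using Q_pert[OF y(2) q] key[OF q] by linarith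
    qed
    then show ?thesis unfolding ET_def using y by auto
  qed
  then show ?thesis unfolding has_nonempty_interior_def using z(1) e0 by blast
qed

lemma lin_ident:
  assumes y1: "y1 \<in> Vsp R" and fin: "finite R" and e1: "e1 > 0"
    and h: "\<forall>y\<in>Vsp R. (\<forall>r\<in>R. \<bar>y r - y1 r\<bar> < e1) \<longrightarrow> (\<Sum>r\<in>R. c r * y r) = 0"
    and r0: "r0 \<in> R"
  shows "c r0 = 0"
proof -
  define y where "y = (\<lambda>r. y1 r + (if r = r0 then e1 / 2 else 0))"
  have yV: "y \<in> Vsp R" using y1 r0 unfolding y_def Vsp_def by auto
  have "\<forall>r\<in>R. \<bar>y r - y1 r\<bar> < e1" unfolding y_def using e1 by auto
  then have 1: "(\<Sum>r\<in>R. c r * y r) = 0" using h yV by blast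
  have 0: "(\<Sum>r\<in>R. c r * y1 r) = 0" using h y1 e1 by auto
  have "(\<Sum>r\<in>R. c r * y r) = (\<Sum>r\<in>R. c r * y1 r) + (\<Sum>r\<in>R. if r = r0 then c r * (e1 / 2) else 0)"
  proof -
    have "(\<Sum>r\<in>R. c r * y r) = (\<Sum>r\<in>R. c r * y1 r + (if r = r0 then c r * (e1 / 2) else 0))"
      unfolding y_def by (intro sum.cong) (auto simp: algebra_simps)
    then show ?thesis by (simp only: sum.distrib)
  qed
  also have "(\<Sum>r\<in>R. if r = r0 then c r * (e1 / 2) else 0) = c r0 * (e1 / 2)"
    using fin r0 by (simp add: sum.delta)
  finally show ?thesis using 0 1 e1 by simp
qed

lemma web_fan_char:
  "web_fan 2 n = {D. (\<exists>A. D = {y \<in> Vsp (inner_regions 2 n). \<forall>K\<in>k_subsets 2 n.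
       TropP 2 n K y = (\<Sum>r\<in>inner_regions 2 n. A K r * y r)}) \<and> has_nonempty_interior (inner_regions 2 n) D}"
  unfolding web_fan_def linearity_domains_def by simp

lemma supset:
  assumes n: "n \<ge> 4" and T: "leaves T = n - 3 + 2"
  shows "ET n T \<in> web_fan 2 n"
proof -
  have T': "internals T = Suc (n - 3)" using T leaves_internals[of T] by simp
  show ?thesis unfolding web_fan_char mem_Collect_eq
  proof
    show "\<exists>A. ET n T = {y \<in> Vsp (inner_regions 2 n). \<forall>K\<in>k_subsets 2 n.
       TropP 2 n K y = (\<Sum>r\<in>inner_regions 2 n. A K r * y r)}"
      by (rule exI[of _ "\<lambda>K. qa (lca 0 T (lo K) (hi K))"]) (rule ET_dom[OF n T'])
  qed (rule ET_int[OF n T'])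
qed

lemma subset:
  assumes n: "n \<ge> 4" and D: "D \<in> web_fan 2 n"
  shows "\<exists>T. leaves T = n - 3 + 2 \<and> D = ET n T"
proof -
  let ?R = "inner_regions 2 n"
  obtain A where A: "D = {y \<in> Vsp ?R. \<forall>K\<in>k_subsets 2 n. TropP 2 n K y = (\<Sum>r\<in>?R. A K r * y r)}"
    and int: "has_nonempty_interior ?R D" using D unfolding web_fan_char by blast
  obtain y0 e where y0: "y0 \<in> Vsp ?R" and e: "e > 0"
    and ball: "\<forall>y\<in>Vsp ?R. (\<forall>r\<in>?R. \<bar>y r - y0 r\<bar> < e) \<longrightarrow> y \<in> D"
    using int unfolding has_nonempty_interior_def by blast
  obtain T where T: "internals T = Suc (n - 3)" "hpd 0 (Q y0) 0 T" using cartesian by blast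
  obtain z where z: "z \<in> Vsp ?R" "hpd 1 (Q z) 0 T" using strict_point[OF n T(1)] by blast
  define M where "M = (\<Sum>r\<in>?R. \<bar>z r\<bar>) + 1"
  have M1: "M \<ge> 1" unfolding M_def by (simp add: sum_nonneg)
  have zM: "\<bar>z r\<bar> < M" if "r \<in> ?R" for r
  proof -
    have "\<bar>z r\<bar> \<le> (\<Sum>r\<in>?R. \<bar>z r\<bar>)" using that R_fin by (intro member_le_sum) auto
    then show ?thesis unfolding M_def by simp
  qed
  define \<delta> where "\<delta> = e / (2 * M)"
  have d0: "\<delta> > 0" unfolding \<delta>_def using e M1 by simp
  have dle: "\<delta> \<le> e / 2" unfolding \<delta>_def using e M1 by (simp add: field_simps)
  define y1 where "y1 = (\<lambda>r. y0 r + \<delta> * z r)"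
  have y1V: "y1 \<in> Vsp ?R" using y0 z(1) unfolding y1_def Vsp_def by auto
  have y1c: "\<bar>y1 r - y0 r\<bar> < e / 2" if "r \<in> ?R" for r
  proof -
    have "\<bar>y1 r - y0 r\<bar> = \<delta> * \<bar>z r\<bar>" unfolding y1_def using d0 by (simp add: abs_mult)
    also have "\<dots> < \<delta> * M" using zM[OF that] d0 by simp
    also have "\<dots> = e / 2" unfolding \<delta>_def using M1 by simp
    finally show ?thesis .
  qed
  have Qy1: "Q y1 = (\<lambda>q. Q y0 q + \<delta> * Q z q)" unfolding y1_def by (rule ext) (rule Q_add)
  have h1: "hpd \<delta> (Q y1) 0 T" unfolding Qy1 using hpd_comb[OF T(2) z(2), of \<delta>] d0 by simp
  define e1 where "e1 = \<delta> / (2 * (real (n - 3) + 1))"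
  have e10: "e1 > 0" unfolding e1_def using d0 by simp
  have e1le: "e1 \<le> e / 2"
  proof -
    have "e1 \<le> \<delta>" unfolding e1_def using d0 by (simp add: field_simps)
    then show ?thesis using dle by simp
  qed
  have key: "real m * e1 < \<delta> / 2" if "m \<le> n - 3" for m
  proof -
    have "real m * e1 \<le> real (n - 3) * e1" using that e10 by (intro mult_right_mono) auto
    also have "\<dots> < \<delta> / 2" unfolding e1_def using d0 by (simp add: field_simps)
    finally show ?thesis .
  qed
  have inball: "(\<Sum>r\<in>?R. (A K r - qa (lca 0 T (lo K) (hi K)) r) * y r) = 0"
    if K: "K \<in> k_subsets 2 n" and y: "y \<in> Vsp ?R" "\<forall>r\<in>?R. \<bar>y r - y1 r\<bar> < e1" for K y
  proof -
    have "\<forall>r\<in>?R. \<bar>y r - y0 r\<bar> < e"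
    proof
      fix r assume r: "r \<in> ?R"
      have "\<bar>y r - y1 r\<bar> < e1" using y(2) r by blast
      then show "\<bar>y r - y0 r\<bar> < e" using y1c[OF r] e1le by linarith
    qed
    then have yD: "y \<in> D" using ball y(1) by blast
    have "hpd 0 (Q y) 0 T"
    proof (rule hpd_pert[OF h1])
      fix q assume "0 \<le> q" "q < 0 + internals T"
      then have q: "q \<le> n - 3" using T by auto
      show "\<bar>Q y q - Q y1 q\<bar> < \<delta> / 2" using Q_pert[OF y(2) q] key[OF q] by linarith
    qed
    then have "y \<in> ET n T" unfolding ET_def using y by auto
    then have 1: "TropP 2 n K y = (\<Sum>r\<in>?R. qa (lca 0 T (lo K) (hi K)) r * y r)"
      using ET_dom[OF n T(1)] K by auto
    have 2: "TropP 2 n K y = (\<Sum>r\<in>?R. A K r * y r)" using yD A K by auto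
    show ?thesis using 1 2 by (simp add: algebra_simps sum_subtractf)
  qed
  have coef: "A K r = qa (lca 0 T (lo K) (hi K)) r" if "K \<in> k_subsets 2 n" "r \<in> ?R" for K r
    using lin_ident[OF y1V R_fin e10 _ that(2), of "\<lambda>r. A K r - qa (lca 0 T (lo K) (hi K)) r"]
      inball[OF that(1)] by auto
  have "D = ET n T"
  proof -
    have "(\<Sum>r\<in>?R. A K r * y r) = (\<Sum>r\<in>?R. qa (lca 0 T (lo K) (hi K)) r * y r)"
      if "K \<in> k_subsets 2 n" for K y
      using coef[OF that] by (intro sum.cong) auto
    then show ?thesis unfolding A ET_dom[OF n T(1)] by auto
  qed
  moreover have "leaves T = n - 3 + 2" using T(1) leaves_internals[of T] by simp
  ultimately show ?thesis by blast
qed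

lemma Q_Px:
  assumes "q \<le> n - 3"
  shows "Q y q = Px (coords2 n y) q"
proof -
  have "Px (coords2 n y) q = (\<Sum>l\<in>{1..q}. y (1, Suc l))"
    unfolding Px_def coords2_def using assms by (intro sum.cong) auto
  also have "\<dots> = (\<Sum>c\<in>{Suc 1..Suc q}. y (1, c))"
    by (rule sum.shift_bounds_cl_Suc_ivl[symmetric])
  finally show ?thesis unfolding Q_def by (simp add: numeral_2_eq_2)
qed

lemma image_ET:
  assumes n: "n \<ge> 4" and T: "internals T = Suc (n - 3)"
  shows "coords2 n ` ET n T = SP_cone (n - 3) T"
proof -
  have hc: "hpd 0 (Q y) 0 T = hpd 0 (Px (coords2 n y)) 0 T" for y
    by (rule hpd_cong) (use T Q_Px in auto)
  have cV: "coords2 n y \<in> Vsp {1..n - 3}" for y unfolding coords2_def Vsp_def by auto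
  show ?thesis unfolding SP_cone_char
  proof
    show "coords2 n ` ET n T \<subseteq> {x \<in> Vsp {1..n - 3}. hpd 0 (Px x) 0 T}"
      unfolding ET_def using hc cV by auto
  next
    show "{x \<in> Vsp {1..n - 3}. hpd 0 (Px x) 0 T} \<subseteq> coords2 n ` ET n T"
    proof
      fix x assume x: "x \<in> {x \<in> Vsp {1..n - 3}. hpd 0 (Px x) 0 T}"
      define y :: "nat \<times> nat \<Rightarrow> real" where
        "y = (\<lambda>(a, c). if a = 1 \<and> 2 \<le> c \<and> c \<le> n - 2 then x (c - 1) else 0)"
      have yV: "y \<in> Vsp (inner_regions 2 n)" unfolding y_def Vsp_def inner_regions_def by auto
      have cy: "coords2 n y = x"
      proof
        fix m show "coords2 n y m = x m"
          using x n unfolding coords2_def y_def Vsp_def by auto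
      qed
      have "y \<in> ET n T" unfolding ET_def using yV x hc[of y] cy by simp
      then show "x \<in> coords2 n ` ET n T" using cy by blast
    qed
  qed
qed

theorem mainTheorem8:
  fixes n :: nat
  assumes "n \<ge> 4"
  shows "(\<lambda>C. coords2 n ` C) ` web_fan 2 n = stanley_pitman_fan (n - 3)"
proof -
  have wf: "web_fan 2 n = {ET n T | T. leaves T = n - 3 + 2}"
    using subset[OF assms] supset[OF assms] by blast
  have "coords2 n ` ET n T = SP_cone (n - 3) T" if "leaves T = n - 3 + 2" for T
    using image_ET[OF assms] that leaves_internals[of T] by simp
  then show ?thesis unfolding wf stanley_pitman_fan_def by auto
qed

end
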